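(* For every integer $m\ge 0$ and all integers $n,k$ with $0\le n,k<3\cdot 2^m$, $$\binom{n+3\cdot 2^m}{k}_F\equiv \binom{n}{k}_F \pmod 2.$$
   Context: The Fibonacci numbers are defined by $F_0=0$, $F_1=1$, $F_n=F_{n-1}+F_{n-2}$ for $n\ge 2$. For $n\ge 0$ let $n!_F=F_1F_2\cdots F_n$ (with $0!_F=1$), and for $0\le k\le n$ define the Fibonomial coefficient $\binom{n}{k}_F=\dfrac{n!_F}{k!_F\,(n-k)!_F}$; by convention $\binom{n}{k}_F=0$ if $k<0$ or $k>n$. *)

theory Defs
  imports "HOL-Number_Theory.Number_Theory"
begin

definition fib_fact :: "nat \<Rightarrow> nat" where
  "fib_fact n = (\<Prod>i\<in>{1..n}. fib i)"

text \<open>Fibonomial coefficient; the quotient is exact (a known integer), so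
  natural-number division gives the paper's value. Zero for k > n.\<close>
definition fibonomial :: "nat \<Rightarrow> nat \<Rightarrow> nat" where
  "fibonomial n k = (if k \<le> n then fib_fact n div (fib_fact k * fib_fact (n - k)) else 0)"

end

theory Submission
  imports Defs
begin

fun G :: "nat \<Rightarrow> nat \<Rightarrow> nat" where
  "G n 0 = 1"
| "G 0 (Suc k) = 0"
| "G (Suc n) (Suc k) = fib (n - k + 1) * G n k + fib k * G n (Suc k)"

lemma G_zero: "n < k \<Longrightarrow> G n k = 0"
  by (induction n k rule: G.induct) auto

lemma ff_0[simp]: "fib_fact 0 = 1"
  unfolding fib_fact_def by simp

lemma ff_Suc: "fib_fact (Suc n) = fib (Suc n) * fib_fact n"
  unfolding fib_fact_def by (simp add: prod.nat_ivl_Suc' mult.commute)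

lemma ff_pos: "fib_fact n > 0"
  unfolding fib_fact_def by (auto intro!: prod_pos simp: fib_neq_0_nat)

lemma G_prod: "k \<le> n \<Longrightarrow> G n k * fib_fact k * fib_fact (n - k) = fib_fact n"
proof (induction n arbitrary: k)
  case 0 then show ?case by (simp add: fib_fact_def)
next
  case (Suc n)
  show ?case
  proof (cases k)
    case 0 then show ?thesis by simp
  next
    case (Suc j)
    with Suc.prems have jn: "j \<le> n" by simp
    have A: "fib_fact (Suc j) * fib_fact (n - j) * (fib (n - j + 1) * G n j)
          = fib (Suc j) * fib (Suc (n - j)) * fib_fact n"
      using Suc.IH[OF jn] by (simp add: ff_Suc algebra_simps)
    have B: "fib_fact (Suc j) * fib_fact (n - j) * (fib j * G n (Suc j))
          = fib j * fib (n - j) * fib_fact n"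
    proof (cases "j = n")
      case True then show ?thesis by (simp add: G_zero)
    next
      case False
      then have jn': "Suc j \<le> n" using jn by simp
      have "n - j = Suc (n - Suc j)" using jn' by simp
      then have "fib_fact (n - j) = fib (n - j) * fib_fact (n - Suc j)"
        by (simp add: ff_Suc)
      then show ?thesis using Suc.IH[OF jn'] by (simp add: algebra_simps)
    qed
    have F: "fib (Suc n) = fib (Suc j) * fib (Suc (n - j)) + fib j * fib (n - j)"
      using fib_add[of "n - j" j] jn by (simp add: add.commute)
    have "G (Suc n) k * fib_fact k * fib_fact (Suc n - k)
        = fib_fact (Suc j) * fib_fact (n - j) * (fib (n - j + 1) * G n j)
          + fib_fact (Suc j) * fib_fact (n - j) * (fib j * G n (Suc j))"
      using Suc by (simp add: algebra_simps)
    also have "\<dots> = fib (Suc n) * fib_fact n" unfolding A B F by (simp add: algebra_simps)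
    finally show ?thesis by (simp add: ff_Suc)
  qed
qed

lemma fibonomial_G: "fibonomial n k = G n k"
proof (cases "k \<le> n")
  case True
  have "fib_fact n = G n k * (fib_fact k * fib_fact (n - k))"
    using G_prod[OF True] by (simp add: mult.assoc)
  moreover have "fib_fact k * fib_fact (n - k) > 0" using ff_pos by simp
  ultimately show ?thesis using True unfolding fibonomial_def by simp
next
  case False then show ?thesis unfolding fibonomial_def by (simp add: G_zero)
qed

lemma fib_mod2: "fib j mod 2 = (if 3 dvd j then 0 else 1)"
proof (induction j rule: fib.induct)
  case 1 then show ?case by simp
next
  case 2 then show ?case by simp
next
  case (3 n)
  have "fib (Suc (Suc n)) mod 2 = (fib (Suc n) mod 2 + fib n mod 2) mod 2"
    by (simp add: mod_add_eq)
  also have "\<dots> = (if 3 dvd Suc (Suc n) then 0 else 1)"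
    unfolding 3 by presburger
  finally show ?case .
qed

definition P :: "nat \<Rightarrow> nat \<Rightarrow> nat" where
  "P n k = (if k \<le> n \<and> k mod 3 \<le> n mod 3 then (n div 3 choose k div 3) mod 2 else 0)"

lemma Pe: "r < 3 \<Longrightarrow> s < 3 \<Longrightarrow> P (3*a+r) (3*b+s) = (if 3*b+s \<le> 3*a+r \<and> s \<le> r then (a choose b) mod 2 else 0)"
  unfolding P_def by simp

lemma case_0_0: assumes "k \<le> n" "n = 3*a+0" "k = 3*b+0"
  shows "((if 3 dvd (n-k+1) then 0 else 1) * P n k + (if 3 dvd k then 0 else 1) * P n (Suc k)) mod 2 = P (Suc n) (Suc k)"
proof -
  have t1: "P n k = (if 3*b+0 \<le> 3*a+0 \<and> 0 \<le> (0::nat) then (a choose b) mod 2 else 0)"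
    unfolding assms(2,3) by (rule Pe) simp_all
  have e2: "Suc k = 3*b+1" using assms by simp
  have t2: "P n (Suc k) = (if 3*b+1 \<le> 3*a+0 \<and> 1 \<le> (0::nat) then (a choose b) mod 2 else 0)"
    unfolding e2 assms(2) by (rule Pe) simp_all
  have e3: "Suc n = 3*a+1" using assms by simp
  have t3: "P (Suc n) (Suc k) = (if 3*b+1 \<le> 3*a+1 \<and> 1 \<le> (1::nat) then (a choose b) mod 2 else 0)"
    unfolding e2 e3 by (rule Pe) simp_all
  have d1: "3 dvd (n-k+1) \<longleftrightarrow> False" using assms by presburger
  have d2: "3 dvd k \<longleftrightarrow> True" using assms by presburger
  show ?thesis
  proof (cases "b < a")
    case True then show ?thesis unfolding t1 t2 t3 d1 d2 using assms
      by (auto simp: mod_add_eq; presburger)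
  next
    case False
    then consider "a = b" | "a < b" by linarith
    then show ?thesis unfolding t1 t2 t3 d1 d2 using assms
      by cases (auto simp: mod_add_eq)
  qed
qed

lemma case_0_1: assumes "k \<le> n" "n = 3*a+0" "k = 3*b+1"
  shows "((if 3 dvd (n-k+1) then 0 else 1) * P n k + (if 3 dvd k then 0 else 1) * P n (Suc k)) mod 2 = P (Suc n) (Suc k)"
proof -
  have t1: "P n k = (if 3*b+1 \<le> 3*a+0 \<and> 1 \<le> (0::nat) then (a choose b) mod 2 else 0)"
    unfolding assms(2,3) by (rule Pe) simp_all
  have e2: "Suc k = 3*b+2" using assms by simp
  have t2: "P n (Suc k) = (if 3*b+2 \<le> 3*a+0 \<and> 2 \<le> (0::nat) then (a choose b) mod 2 else 0)"
    unfolding e2 assms(2) by (rule Pe) simp_all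
  have e3: "Suc n = 3*a+1" using assms by simp
  have t3: "P (Suc n) (Suc k) = (if 3*b+2 \<le> 3*a+1 \<and> 2 \<le> (1::nat) then (a choose b) mod 2 else 0)"
    unfolding e2 e3 by (rule Pe) simp_all
  have d1: "3 dvd (n-k+1) \<longleftrightarrow> True" using assms by presburger
  have d2: "3 dvd k \<longleftrightarrow> False" using assms by presburger
  show ?thesis
  proof (cases "b < a")
    case True then show ?thesis unfolding t1 t2 t3 d1 d2 using assms
      by (auto simp: mod_add_eq; presburger)
  next
    case False
    then consider "a = b" | "a < b" by linarith
    then show ?thesis unfolding t1 t2 t3 d1 d2 using assms
      by cases (auto simp: mod_add_eq)
  qed
qed

lemma case_0_2: assumes "k \<le> n" "n = 3*a+0" "k = 3*b+2"
  shows "((if 3 dvd (n-k+1) then 0 else 1) * P n k + (if 3 dvd k then 0 else 1) * P n (Suc k)) mod 2 = P (Suc n) (Suc k)"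
proof -
  have t1: "P n k = (if 3*b+2 \<le> 3*a+0 \<and> 2 \<le> (0::nat) then (a choose b) mod 2 else 0)"
    unfolding assms(2,3) by (rule Pe) simp_all
  have e2: "Suc k = 3*(b+1)+0" using assms by simp
  have t2: "P n (Suc k) = (if 3*(b+1)+0 \<le> 3*a+0 \<and> 0 \<le> (0::nat) then (a choose (b+1)) mod 2 else 0)"
    unfolding e2 assms(2) by (rule Pe) simp_all
  have e3: "Suc n = 3*a+1" using assms by simp
  have t3: "P (Suc n) (Suc k) = (if 3*(b+1)+0 \<le> 3*a+1 \<and> 0 \<le> (1::nat) then (a choose (b+1)) mod 2 else 0)"
    unfolding e2 e3 by (rule Pe) simp_all
  have d1: "3 dvd (n-k+1) \<longleftrightarrow> False" using assms by presburger
  have d2: "3 dvd k \<longleftrightarrow> False" using assms by presburger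
  show ?thesis
  proof (cases "b < a")
    case True then show ?thesis unfolding t1 t2 t3 d1 d2 using assms
      by (auto simp: mod_add_eq; presburger)
  next
    case False
    then consider "a = b" | "a < b" by linarith
    then show ?thesis unfolding t1 t2 t3 d1 d2 using assms
      by cases (auto simp: mod_add_eq)
  qed
qed

lemma case_1_0: assumes "k \<le> n" "n = 3*a+1" "k = 3*b+0"
  shows "((if 3 dvd (n-k+1) then 0 else 1) * P n k + (if 3 dvd k then 0 else 1) * P n (Suc k)) mod 2 = P (Suc n) (Suc k)"
proof -
  have t1: "P n k = (if 3*b+0 \<le> 3*a+1 \<and> 0 \<le> (1::nat) then (a choose b) mod 2 else 0)"
    unfolding assms(2,3) by (rule Pe) simp_all
  have e2: "Suc k = 3*b+1" using assms by simp
  have t2: "P n (Suc k) = (if 3*b+1 \<le> 3*a+1 \<and> 1 \<le> (1::nat) then (a choose b) mod 2 else 0)"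
    unfolding e2 assms(2) by (rule Pe) simp_all
  have e3: "Suc n = 3*a+2" using assms by simp
  have t3: "P (Suc n) (Suc k) = (if 3*b+1 \<le> 3*a+2 \<and> 1 \<le> (2::nat) then (a choose b) mod 2 else 0)"
    unfolding e2 e3 by (rule Pe) simp_all
  have d1: "3 dvd (n-k+1) \<longleftrightarrow> False" using assms by presburger
  have d2: "3 dvd k \<longleftrightarrow> True" using assms by presburger
  show ?thesis
  proof (cases "b < a")
    case True then show ?thesis unfolding t1 t2 t3 d1 d2 using assms
      by (auto simp: mod_add_eq; presburger)
  next
    case False
    then consider "a = b" | "a < b" by linarith
    then show ?thesis unfolding t1 t2 t3 d1 d2 using assms
      by cases (auto simp: mod_add_eq)
  qed
qed

lemma case_1_1: assumes "k \<le> n" "n = 3*a+1" "k = 3*b+1"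
  shows "((if 3 dvd (n-k+1) then 0 else 1) * P n k + (if 3 dvd k then 0 else 1) * P n (Suc k)) mod 2 = P (Suc n) (Suc k)"
proof -
  have t1: "P n k = (if 3*b+1 \<le> 3*a+1 \<and> 1 \<le> (1::nat) then (a choose b) mod 2 else 0)"
    unfolding assms(2,3) by (rule Pe) simp_all
  have e2: "Suc k = 3*b+2" using assms by simp
  have t2: "P n (Suc k) = (if 3*b+2 \<le> 3*a+1 \<and> 2 \<le> (1::nat) then (a choose b) mod 2 else 0)"
    unfolding e2 assms(2) by (rule Pe) simp_all
  have e3: "Suc n = 3*a+2" using assms by simp
  have t3: "P (Suc n) (Suc k) = (if 3*b+2 \<le> 3*a+2 \<and> 2 \<le> (2::nat) then (a choose b) mod 2 else 0)"
    unfolding e2 e3 by (rule Pe) simp_all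
  have d1: "3 dvd (n-k+1) \<longleftrightarrow> False" using assms by presburger
  have d2: "3 dvd k \<longleftrightarrow> False" using assms by presburger
  show ?thesis
  proof (cases "b < a")
    case True then show ?thesis unfolding t1 t2 t3 d1 d2 using assms
      by (auto simp: mod_add_eq; presburger)
  next
    case False
    then consider "a = b" | "a < b" by linarith
    then show ?thesis unfolding t1 t2 t3 d1 d2 using assms
      by cases (auto simp: mod_add_eq)
  qed
qed

lemma case_1_2: assumes "k \<le> n" "n = 3*a+1" "k = 3*b+2"
  shows "((if 3 dvd (n-k+1) then 0 else 1) * P n k + (if 3 dvd k then 0 else 1) * P n (Suc k)) mod 2 = P (Suc n) (Suc k)"
proof -
  have t1: "P n k = (if 3*b+2 \<le> 3*a+1 \<and> 2 \<le> (1::nat) then (a choose b) mod 2 else 0)"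
    unfolding assms(2,3) by (rule Pe) simp_all
  have e2: "Suc k = 3*(b+1)+0" using assms by simp
  have t2: "P n (Suc k) = (if 3*(b+1)+0 \<le> 3*a+1 \<and> 0 \<le> (1::nat) then (a choose (b+1)) mod 2 else 0)"
    unfolding e2 assms(2) by (rule Pe) simp_all
  have e3: "Suc n = 3*a+2" using assms by simp
  have t3: "P (Suc n) (Suc k) = (if 3*(b+1)+0 \<le> 3*a+2 \<and> 0 \<le> (2::nat) then (a choose (b+1)) mod 2 else 0)"
    unfolding e2 e3 by (rule Pe) simp_all
  have d1: "3 dvd (n-k+1) \<longleftrightarrow> True" using assms by presburger
  have d2: "3 dvd k \<longleftrightarrow> False" using assms by presburger
  show ?thesis
  proof (cases "b < a")
    case True then show ?thesis unfolding t1 t2 t3 d1 d2 using assms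
      by (auto simp: mod_add_eq; presburger)
  next
    case False
    then consider "a = b" | "a < b" by linarith
    then show ?thesis unfolding t1 t2 t3 d1 d2 using assms
      by cases (auto simp: mod_add_eq)
  qed
qed

lemma case_2_0: assumes "k \<le> n" "n = 3*a+2" "k = 3*b+0"
  shows "((if 3 dvd (n-k+1) then 0 else 1) * P n k + (if 3 dvd k then 0 else 1) * P n (Suc k)) mod 2 = P (Suc n) (Suc k)"
proof -
  have t1: "P n k = (if 3*b+0 \<le> 3*a+2 \<and> 0 \<le> (2::nat) then (a choose b) mod 2 else 0)"
    unfolding assms(2,3) by (rule Pe) simp_all
  have e2: "Suc k = 3*b+1" using assms by simp
  have t2: "P n (Suc k) = (if 3*b+1 \<le> 3*a+2 \<and> 1 \<le> (2::nat) then (a choose b) mod 2 else 0)"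
    unfolding e2 assms(2) by (rule Pe) simp_all
  have e3: "Suc n = 3*(a+1)+0" using assms by simp
  have t3: "P (Suc n) (Suc k) = (if 3*b+1 \<le> 3*(a+1)+0 \<and> 1 \<le> (0::nat) then ((a+1) choose b) mod 2 else 0)"
    unfolding e2 e3 by (rule Pe) simp_all
  have d1: "3 dvd (n-k+1) \<longleftrightarrow> True" using assms by presburger
  have d2: "3 dvd k \<longleftrightarrow> True" using assms by presburger
  show ?thesis
  proof (cases "b < a")
    case True then show ?thesis unfolding t1 t2 t3 d1 d2 using assms
      by (auto simp: mod_add_eq; presburger)
  next
    case False
    then consider "a = b" | "a < b" by linarith
    then show ?thesis unfolding t1 t2 t3 d1 d2 using assms
      by cases (auto simp: mod_add_eq)
  qed
qed

lemma case_2_1: assumes "k \<le> n" "n = 3*a+2" "k = 3*b+1"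
  shows "((if 3 dvd (n-k+1) then 0 else 1) * P n k + (if 3 dvd k then 0 else 1) * P n (Suc k)) mod 2 = P (Suc n) (Suc k)"
proof -
  have t1: "P n k = (if 3*b+1 \<le> 3*a+2 \<and> 1 \<le> (2::nat) then (a choose b) mod 2 else 0)"
    unfolding assms(2,3) by (rule Pe) simp_all
  have e2: "Suc k = 3*b+2" using assms by simp
  have t2: "P n (Suc k) = (if 3*b+2 \<le> 3*a+2 \<and> 2 \<le> (2::nat) then (a choose b) mod 2 else 0)"
    unfolding e2 assms(2) by (rule Pe) simp_all
  have e3: "Suc n = 3*(a+1)+0" using assms by simp
  have t3: "P (Suc n) (Suc k) = (if 3*b+2 \<le> 3*(a+1)+0 \<and> 2 \<le> (0::nat) then ((a+1) choose b) mod 2 else 0)"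
    unfolding e2 e3 by (rule Pe) simp_all
  have d1: "3 dvd (n-k+1) \<longleftrightarrow> False" using assms by presburger
  have d2: "3 dvd k \<longleftrightarrow> False" using assms by presburger
  show ?thesis
  proof (cases "b < a")
    case True then show ?thesis unfolding t1 t2 t3 d1 d2 using assms
      by (auto simp: mod_add_eq; presburger)
  next
    case False
    then consider "a = b" | "a < b" by linarith
    then show ?thesis unfolding t1 t2 t3 d1 d2 using assms
      by cases (auto simp: mod_add_eq)
  qed
qed

lemma case_2_2: assumes "k \<le> n" "n = 3*a+2" "k = 3*b+2"
  shows "((if 3 dvd (n-k+1) then 0 else 1) * P n k + (if 3 dvd k then 0 else 1) * P n (Suc k)) mod 2 = P (Suc n) (Suc k)"
proof -
  have t1: "P n k = (if 3*b+2 \<le> 3*a+2 \<and> 2 \<le> (2::nat) then (a choose b) mod 2 else 0)"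
    unfolding assms(2,3) by (rule Pe) simp_all
  have e2: "Suc k = 3*(b+1)+0" using assms by simp
  have t2: "P n (Suc k) = (if 3*(b+1)+0 \<le> 3*a+2 \<and> 0 \<le> (2::nat) then (a choose (b+1)) mod 2 else 0)"
    unfolding e2 assms(2) by (rule Pe) simp_all
  have e3: "Suc n = 3*(a+1)+0" using assms by simp
  have t3: "P (Suc n) (Suc k) = (if 3*(b+1)+0 \<le> 3*(a+1)+0 \<and> 0 \<le> (0::nat) then ((a+1) choose (b+1)) mod 2 else 0)"
    unfolding e2 e3 by (rule Pe) simp_all
  have d1: "3 dvd (n-k+1) \<longleftrightarrow> False" using assms by presburger
  have d2: "3 dvd k \<longleftrightarrow> False" using assms by presburger
  show ?thesis
  proof (cases "b < a")
    case True then show ?thesis unfolding t1 t2 t3 d1 d2 using assms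
      by (auto simp: mod_add_eq; presburger)
  next
    case False
    then consider "a = b" | "a < b" by linarith
    then show ?thesis unfolding t1 t2 t3 d1 d2 using assms
      by cases (auto simp: mod_add_eq)
  qed
qed

lemma step: assumes "k \<le> n"
  shows "((if 3 dvd (n-k+1) then 0 else 1) * P n k + (if 3 dvd k then 0 else 1) * P n (Suc k)) mod 2 = P (Suc n) (Suc k)"
proof -
  obtain a r where n: "n = 3*a + r" "r < 3" by (metis div_mult_mod_eq mod_less_divisor zero_less_numeral mult.commute)
  obtain b t where k: "k = 3*b + t" "t < 3" by (metis div_mult_mod_eq mod_less_divisor zero_less_numeral mult.commute)
  have "r = 0 \<or> r = 1 \<or> r = 2" "t = 0 \<or> t = 1 \<or> t = 2" using n k by auto
  then show ?thesis
    by (elim disjE) ((rule case_0_0[OF assms, where a=a and b=b]; (simp add: n k; fail)) | (rule case_0_1[OF assms, where a=a and b=b]; (simp add: n k; fail)) | (rule case_0_2[OF assms, where a=a and b=b]; (simp add: n k; fail)) | (rule case_1_0[OF assms, where a=a and b=b]; (simp add: n k; fail)) | (rule case_1_1[OF assms, where a=a and b=b]; (simp add: n k; fail)) | (rule case_1_2[OF assms, where a=a and b=b]; (simp add: n k; fail)) | (rule case_2_0[OF assms, where a=a and b=b]; (simp add: n k; fail)) | (rule case_2_1[OF assms, where a=a and b=b]; (simp add: n k; fail)) | (rule case_2_2[OF assms, where a=a and b=b]; (simp add: n k; fail)))+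
qed

lemma G_P: "G n k mod 2 = P n k"
proof (induction n arbitrary: k)
  case 0 then show ?case by (cases k) (simp_all add: P_def)
next
  case (Suc n)
  show ?case
  proof (cases k)
    case 0 then show ?thesis by (simp add: P_def)
  next
    case (Suc j)
    show ?thesis
    proof (cases "j \<le> n")
      case True
      have "G (Suc n) (Suc j) mod 2 = ((fib (n - j + 1) mod 2) * (G n j mod 2) + (fib j mod 2) * (G n (Suc j) mod 2)) mod 2"
        by (metis G.simps(3) mod_add_eq mod_mult_eq)
      also have "\<dots> = ((if 3 dvd (n-j+1) then 0 else 1) * P n j + (if 3 dvd j then 0 else 1) * P n (Suc j)) mod 2"
        unfolding fib_mod2 Suc.IH by simp
      also have "\<dots> = P (Suc n) (Suc j)" by (rule step[OF True])
      finally show ?thesis using Suc by simp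
    next
      case False
      then show ?thesis using Suc by (simp add: G_zero P_def)
    qed
  qed
qed

lemma mod2_aux: "((x::nat) + (y + y)) mod 2 = x mod 2" "((x::nat) + (y + (y + z))) mod 2 = (x + (2 * y + z)) mod 2"
  by presburger+

lemma binom_pow2: "(a + 2^m choose b) mod 2 = ((a choose b) + (if 2^m \<le> b then a choose (b - 2^m) else 0)) mod 2"
proof (induction m arbitrary: a b)
  case 0 then show ?case by (cases b) (simp_all add: add.commute)
next
  case (Suc m)
  have e: "a + 2 ^ Suc m = (a + 2^m) + 2^m" by simp
  show ?case
  proof (cases "2^m \<le> b")
    case False
    then have "\<not> 2 ^ Suc m \<le> b" by simp
    then show ?thesis unfolding e using Suc.IH[of "a + 2^m" b] Suc.IH[of a b] False by simp
  next
    case True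
    define c where "c = b - 2^m"
    have c1: "(2^m \<le> c) = (2 ^ Suc m \<le> b)" "c - 2^m = b - 2^Suc m" using True by (auto simp: c_def)
    have "(a + 2 ^ Suc m choose b) mod 2 = ((a + 2^m choose b) mod 2 + (a + 2^m choose c) mod 2) mod 2"
      unfolding e Suc.IH[of "a + 2^m" b] using True by (simp add: c_def mod_add_eq)
    also have "\<dots> = ((a choose b) + 2 * (a choose c) + (if 2^m \<le> c then a choose (c - 2^m) else 0)) mod 2"
      unfolding Suc.IH[of a b] Suc.IH[of a c] using True by (simp add: c_def mod_add_eq add.assoc mod2_aux)
    also have "\<dots> = ((a choose b) + (if 2^m \<le> c then a choose (c - 2^m) else 0)) mod 2"
      by (metis (no_types, lifting) add.commute add.left_commute mod_mult_self2 mult.commute)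
    finally show ?thesis unfolding c1 .
  qed
qed

lemma binom_pow2': "a < 2^m \<Longrightarrow> b < 2^m \<Longrightarrow> (a + 2^m choose b) mod 2 = (a choose b) mod 2"
  using binom_pow2[of a m b] by simp

theorem mainTheorem1:
  fixes m n k :: nat
  assumes "n < 3 * 2 ^ m" and "k < 3 * 2 ^ m"
  shows "[fibonomial (n + 3 * 2 ^ m) k = fibonomial n k] (mod 2)"
proof -
  obtain a r where n: "n = 3*a + r" "r < 3" by (metis div_mult_mod_eq mod_less_divisor zero_less_numeral mult.commute)
  obtain b t where k: "k = 3*b + t" "t < 3" by (metis div_mult_mod_eq mod_less_divisor zero_less_numeral mult.commute)
  have a: "a < 2^m" and b: "b < 2^m" using assms n k by linarith+
  have e: "n + 3 * 2^m = 3 * (a + 2^m) + r" using n by simp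
  have "P (n + 3 * 2^m) k = (if 3*b+t \<le> 3*(a + 2^m)+r \<and> t \<le> r then (a + 2^m choose b) mod 2 else 0)"
    unfolding e k(1) by (rule Pe) (use n k in simp_all)
  also have "\<dots> = (if t \<le> r then (a choose b) mod 2 else 0)"
    using b binom_pow2'[OF a b] by simp
  also have "\<dots> = P n k"
  proof -
    have "P n k = (if 3*b+t \<le> 3*a+r \<and> t \<le> r then (a choose b) mod 2 else 0)"
      unfolding n(1) k(1) by (rule Pe) (use n k in simp_all)
    moreover have "t \<le> r \<Longrightarrow> \<not> 3*b+t \<le> 3*a+r \<Longrightarrow> a < b" by linarith
    ultimately show ?thesis by (auto simp: binomial_eq_0)
  qed
  finally show ?thesis unfolding cong_def fibonomial_G G_P[symmetric] .
qed

end
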